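(* Let $k\ge 2$ and let $G$ be a digraph. Let $G'$ be the digraph constructed as follows: for each vertex $u$ of $G$, $G'$ has $k+1$ vertices $u^-,u^+,u_1,\dots,u_{k-1}$; for each $u$, both $\{u^-,u_1,\dots,u_{k-1}\}$ and $\{u^+,u_1,\dots,u_{k-1}\}$ induce symmetric complete digraphs (every pair joined by a digon), and $u^-u^+$ is an arc; for every arc $uv$ of $G$, $u^+v^-$ is an arc of $G'$; there are no other arcs. Then $\Delta_{min}(G')\le k$, and $G$ is $k$-dicolourable if and only if $G'$ is $k$-dicolourable.
   Context: Digraphs have no loops and no parallel arcs, but may contain digons. A digraph is $k$-dicolourable if its vertices can be coloured with $k$ colours so that no directed cycle is monochromatic. $\Delta_{min}(G)=\max_{v}\min(d^+(v),d^-(v))$. *)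

theory Defs
  imports Main
begin

definition digraph :: "'a set \<Rightarrow> ('a \<times> 'a) set \<Rightarrow> bool" where
  "digraph V A \<longleftrightarrow> finite V \<and> A \<subseteq> V \<times> V \<and> (\<forall>v. (v, v) \<notin> A)"

definition is_dicycle :: "'a set \<Rightarrow> ('a \<times> 'a) set \<Rightarrow> 'a list \<Rightarrow> bool" where
  "is_dicycle V A vs \<longleftrightarrow> 2 \<le> length vs \<and> distinct vs \<and> set vs \<subseteq> V \<and>
     (\<forall>i < length vs. (vs ! i, vs ! ((i + 1) mod length vs)) \<in> A)"

definition dicolouring :: "'a set \<Rightarrow> ('a \<times> 'a) set \<Rightarrow> nat \<Rightarrow> ('a \<Rightarrow> nat) \<Rightarrow> bool" where
  "dicolouring V A k c \<longleftrightarrow> (\<forall>v\<in>V. c v < k) \<and>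
     (\<forall>vs. is_dicycle V A vs \<longrightarrow> \<not> (\<forall>x\<in>set vs. \<forall>y\<in>set vs. c x = c y))"

definition dicolourable :: "'a set \<Rightarrow> ('a \<times> 'a) set \<Rightarrow> nat \<Rightarrow> bool" where
  "dicolourable V A k \<longleftrightarrow> (\<exists>c. dicolouring V A k c)"

definition outdeg :: "'a set \<Rightarrow> ('a \<times> 'a) set \<Rightarrow> 'a \<Rightarrow> nat" where
  "outdeg V A v = card {w \<in> V. (v, w) \<in> A}"

definition indeg :: "'a set \<Rightarrow> ('a \<times> 'a) set \<Rightarrow> 'a \<Rightarrow> nat" where
  "indeg V A v = card {w \<in> V. (w, v) \<in> A}"

definition delta_min :: "'a set \<Rightarrow> ('a \<times> 'a) set \<Rightarrow> nat" where
  "delta_min V A = (if V = {} then 0 else Max ((\<lambda>v. min (outdeg V A v) (indeg V A v)) ` V))"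

text \<open>The construction G': vertex (u,0) is u^-, (u,k) is u^+, (u,i) for 1 \<le> i \<le> k-1 is u_i.\<close>
definition split_V :: "'a set \<Rightarrow> nat \<Rightarrow> ('a \<times> nat) set" where
  "split_V V k = V \<times> {0..k}"

definition split_A :: "'a set \<Rightarrow> ('a \<times> 'a) set \<Rightarrow> nat \<Rightarrow> (('a \<times> nat) \<times> ('a \<times> nat)) set" where
  "split_A V A k =
     {((u, i), (u, j)) | u i j. u \<in> V \<and> i \<noteq> j \<and>
        ((i < k \<and> j < k) \<or> (1 \<le> i \<and> i \<le> k \<and> 1 \<le> j \<and> j \<le> k))}
   \<union> {((u, 0), (u, k)) | u. u \<in> V}
   \<union> {((u, k), (v, 0)) | u v. (u, v) \<in> A}"

end

theory Submission
  imports Defs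
begin

lemma cycle_exists:
  assumes fin: "finite S" and ne: "S \<noteq> {}" and SV: "S \<subseteq> V"
    and succ: "\<forall>x\<in>S. \<exists>y\<in>S. (x,y)\<in>A" and noloop: "\<forall>v. (v,v)\<notin>A"
  shows "\<exists>vs. is_dicycle V A vs \<and> set vs \<subseteq> S"
proof -
  obtain x0 where x0: "x0 \<in> S" using ne by blast
  define nx where "nx x = (SOME y. y \<in> S \<and> (x,y)\<in>A)" for x
  have nx: "nx x \<in> S \<and> (x, nx x) \<in> A" if "x \<in> S" for x
    unfolding nx_def by (rule someI_ex) (use succ that in blast)
  define f where "f n = (nx ^^ n) x0" for n
  have fS: "f n \<in> S" for n
    by (induction n) (auto simp: f_def x0 nx)
  have fstep: "(f n, f (Suc n)) \<in> A" for n
    using nx[OF fS[of n]] by (simp add: f_def)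
  have "\<not> inj_on f {0..card S}"
  proof
    assume "inj_on f {0..card S}"
    moreover have "f ` {0..card S} \<subseteq> S" using fS by auto
    ultimately have "card {0..card S} \<le> card S" using card_inj_on_le fin by blast
    then show False by simp
  qed
  then obtain a b where ab: "a \<noteq> b" "f a = f b" unfolding inj_on_def by blast
  have ex: "\<exists>j. \<exists>i<j. f i = f j"
  proof (cases "a < b")
    case True then show ?thesis using ab by blast
  next
    case False then have "b < a" using ab by simp
    then show ?thesis using ab by metis
  qed
  define J where "J = (LEAST j. \<exists>i<j. f i = f j)"
  have "\<exists>i<J. f i = f J" unfolding J_def by (rule LeastI_ex[OF ex])
  then obtain i where iJ: "i < J" "f i = f J" by blast
  have mn: "f a \<noteq> f b" if "a < b" "b < J" for a b
  proof
    assume "f a = f b"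
    then have "J \<le> b" unfolding J_def using that(1) by (intro Least_le) blast
    then show False using that by simp
  qed
  define L where "L = J - i"
  define vs where "vs = map (\<lambda>t. f (i+t)) [0..<L]"
  have len: "length vs = L" by (simp add: vs_def)
  have nth: "t < L \<Longrightarrow> vs ! t = f (i+t)" for t by (simp add: vs_def)
  have L2: "2 \<le> L"
  proof (rule ccontr)
    assume "\<not> 2 \<le> L"
    then have "L = 1" using iJ unfolding L_def by simp
    then have "J = Suc i" using iJ unfolding L_def by simp
    then show False using fstep[of i] iJ noloop by simp
  qed
  have dist: "distinct vs"
    unfolding distinct_conv_nth len
  proof (intro allI impI)
    fix p q assume pq: "p < L" "q < L" "p \<noteq> q"
    show "vs ! p \<noteq> vs ! q"
    proof (cases "p < q")
      case True then show ?thesis using pq nth mn[of "i+p" "i+q"] unfolding L_def by simp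
    next
      case False then have "q < p" using pq by simp
      then have "f (i+q) \<noteq> f (i+p)" using pq mn[of "i+q" "i+p"] unfolding L_def by simp
      then show ?thesis using pq nth by metis
    qed
  qed
  have setS: "set vs \<subseteq> S" using fS by (auto simp: vs_def)
  have arcs: "(vs ! t, vs ! ((t + 1) mod length vs)) \<in> A" if "t < length vs" for t
  proof (cases "t + 1 < L")
    case True
    then show ?thesis using that nth[of t] nth[of "t+1"] fstep[of "i+t"] len by simp
  next
    case False
    then have "t + 1 = L" using that len by simp
    then have "(t+1) mod length vs = 0" using len by simp
    moreover have "i + t + 1 = J" using iJ \<open>t+1 = L\<close> unfolding L_def by simp
    moreover have "vs ! 0 = f i" using nth[of 0] L2 by simp
    ultimately have "vs ! ((t+1) mod length vs) = f (i + t + 1)" using iJ by simp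
    then show ?thesis using that nth[of t] fstep[of "i+t"] len by simp
  qed
  have "is_dicycle V A vs"
    unfolding is_dicycle_def using L2 len dist setS SV arcs by auto
  then show ?thesis using setS by blast
qed

lemma mod_cancel_aux: "((c::nat) + i) mod k = (c + j) mod k \<Longrightarrow> i mod k = j mod k"
  by (simp add: nat_mod_eq_iff)

lemma arc_cases:
  assumes arc: "((x,i),(y,j)) \<in> split_A V A k"
  shows "(x = y \<and> i \<noteq> j \<and> ((i < k \<and> j < k) \<or> (1 \<le> i \<and> i \<le> k \<and> 1 \<le> j \<and> j \<le> k)))
    \<or> (x = y \<and> i = 0 \<and> j = k) \<or> (i = k \<and> j = 0 \<and> (x,y) \<in> A)"
  using arc unfolding split_A_def by (simp; blast)

lemma mono_arc:
  assumes k: "2 \<le> k" and arc: "((x,i),(y,j)) \<in> split_A V A k"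
    and col: "(c x + i) mod k = (c y + j) mod k"
  shows "(x = y \<and> i = 0 \<and> j = k) \<or> (i = k \<and> j = 0 \<and> (x,y) \<in> A)"
proof -
  consider (a) "x = y" "i \<noteq> j" "(i < k \<and> j < k) \<or> (1 \<le> i \<and> i \<le> k \<and> 1 \<le> j \<and> j \<le> k)"
    | (b) "x = y" "i = 0" "j = k" | (c) "i = k" "j = 0" "(x,y) \<in> A"
    using arc_cases[OF arc] by blast
  then show ?thesis
  proof cases
    case a
    then have "(c x + i) mod k = (c x + j) mod k" using col by simp
    then have m: "i mod k = j mod k" by (rule mod_cancel_aux)
    show ?thesis
    proof (cases "i < k \<and> j < k")
      case True
      then have "i mod k = i" "j mod k = j" by simp_all
      then show ?thesis using m a by simp
    next
      case False
      then have ij: "1 \<le> i \<and> i \<le> k \<and> 1 \<le> j \<and> j \<le> k" using a by linarith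
      show ?thesis
      proof (cases "i = k")
        case True
        then have "j < k" using ij a by simp
        then have "j mod k = j" by simp
        moreover have "i mod k = 0" using True by simp
        ultimately show ?thesis using m ij by simp
      next
        case False
        then have "i < k" using ij by simp
        then have "i mod k = i" by simp
        moreover have "j = k" using False \<open>\<not> (i < k \<and> j < k)\<close> \<open>i < k\<close> ij by simp
        ultimately show ?thesis using m ij by simp
      qed
    qed
  next
    case b then show ?thesis by simp
  next
    case c then show ?thesis by simp
  qed
qed

lemma digon:
  assumes "x \<noteq> y" "(x,y) \<in> A" "(y,x) \<in> A" "x \<in> V" "y \<in> V"
  shows "is_dicycle V A [x,y]"
  unfolding is_dicycle_def using assms
  by (auto simp: less_Suc_eq nth_Cons')

lemma gadget:
  assumes k: "2 \<le> k" and dc: "dicolouring (split_V V k) (split_A V A k) k c" and u: "u \<in> V"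
  shows "c (u,k) = c (u,0)"
proof -
  have nomono: "c x \<noteq> c y" if "x \<noteq> y" "(x,y) \<in> split_A V A k" "(y,x) \<in> split_A V A k"
    "x \<in> split_V V k" "y \<in> split_V V k" for x y
  proof
    assume "c x = c y"
    then have "\<forall>a\<in>set [x,y]. \<forall>b\<in>set [x,y]. c a = c b" by simp
    then show False using dc digon[OF that] unfolding dicolouring_def by blast
  qed
  have inj: "inj_on (\<lambda>j. c (u,j)) {0..<k}"
  proof (rule inj_onI)
    fix i j assume ij: "i \<in> {0..<k}" "j \<in> {0..<k}" "c (u,i) = c (u,j)"
    show "i = j"
    proof (rule ccontr)
      assume "i \<noteq> j"
      then have "c (u,i) \<noteq> c (u,j)"
        using ij u by (intro nomono) (auto simp: split_A_def split_V_def)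
      then show False using ij by simp
    qed
  qed
  have sub: "(\<lambda>j. c (u,j)) ` {0..<k} \<subseteq> {0..<k}"
    using dc u unfolding dicolouring_def split_V_def by auto
  have eq: "(\<lambda>j. c (u,j)) ` {0..<k} = {0..<k}"
    using card_subset_eq[OF _ sub] card_image[OF inj] by simp
  have "c (u,k) \<in> {0..<k}" using dc u unfolding dicolouring_def split_V_def by auto
  then have "c (u,k) \<in> (\<lambda>j. c (u,j)) ` {0..<k}" using eq by simp
  then obtain j where j0: "j \<in> {0..<k}" "c (u,k) = c (u,j)" by blast
  then have j: "j < k" "c (u,k) = c (u,j)" by auto
  show ?thesis
  proof (cases "j = 0")
    case True then show ?thesis using j by simp
  next
    case False
    then have "c (u,j) \<noteq> c (u,k)"
      using j u by (intro nomono) (auto simp: split_A_def split_V_def)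
    then show ?thesis using j by simp
  qed
qed

lemma split_noloop: "2 \<le> k \<Longrightarrow> \<forall>v. (v,v) \<notin> split_A V A k"
  unfolding split_A_def by auto

lemma split_fin: "digraph V A \<Longrightarrow> finite (split_V V k)"
  unfolding split_V_def digraph_def by auto

lemma dir1:
  assumes k: "2 \<le> k" and G: "digraph V A" and dc: "dicolouring V A k c"
  shows "dicolouring (split_V V k) (split_A V A k) k (\<lambda>(u,j). (c u + j) mod k)"
  (is "dicolouring ?V ?A k ?c")
proof -
  have bound: "\<forall>v\<in>?V. ?c v < k" using k by auto
  have "\<not> (\<forall>x\<in>set ws. \<forall>y\<in>set ws. ?c x = ?c y)" if ws: "is_dicycle ?V ?A ws" for ws
  proof
    assume mono: "\<forall>x\<in>set ws. \<forall>y\<in>set ws. ?c x = ?c y"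
    define n where "n = length ws"
    have n2: "2 \<le> n" using ws unfolding is_dicycle_def n_def by simp
    have wsV: "set ws \<subseteq> ?V" using ws unfolding is_dicycle_def by simp
    have step: "\<exists>y\<in>set ws. (x,y) \<in> ?A \<and> ?c x = ?c y" if xin: "x \<in> set ws" for x
    proof -
      obtain t where t: "t < n" "ws ! t = x" using xin unfolding n_def by (auto simp: in_set_conv_nth)
      have "(ws!t, ws ! ((t+1) mod n)) \<in> ?A" using ws t unfolding is_dicycle_def n_def by auto
      moreover have "ws ! ((t+1) mod n) \<in> set ws" using n2 unfolding n_def by (intro nth_mem mod_less_divisor) linarith
      ultimately show ?thesis using t mono xin by blast
    qed
    have mstep: "(x = y \<and> i = 0 \<and> j = k) \<or> (i = k \<and> j = 0 \<and> (x,y) \<in> A)"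
      if "((x,i),(y,j)) \<in> ?A" "?c (x,i) = ?c (y,j)" for x i y j
      using mono_arc[OF k that(1), of c] that(2) by simp
    define S where "S = {u. (u,0) \<in> set ws}"
    have SV: "S \<subseteq> V" using wsV unfolding S_def split_V_def by auto
    have finS: "finite S" using SV G unfolding digraph_def by (auto intro: finite_subset)
    have Sne: "S \<noteq> {}"
    proof -
      obtain x where x: "x \<in> set ws" using n2 unfolding n_def by (cases ws) auto
      obtain y where y: "y \<in> set ws" "(x,y) \<in> ?A" "?c x = ?c y" using step[OF x] by blast
      obtain x1 x2 y1 y2 where xy: "x = (x1,x2)" "y = (y1,y2)" by (cases x, cases y)
      have "x2 = 0 \<or> y2 = 0" using mstep[of x1 x2 y1 y2] y xy by blast
      then have "x1 \<in> S \<or> y1 \<in> S" using x y xy unfolding S_def by blast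
      then show ?thesis by blast
    qed
    have Ssucc: "\<forall>u\<in>S. \<exists>v\<in>S. (u,v) \<in> A"
    proof
      fix u assume "u \<in> S"
      then have u0: "(u,0) \<in> set ws" unfolding S_def by simp
      obtain y where y: "y \<in> set ws" "((u,0),y) \<in> ?A" "?c (u,0) = ?c y" using step[OF u0] by blast
      obtain y1 y2 where yy: "y = (y1,y2)" by (cases y)
      have "(u = y1 \<and> 0 = (0::nat) \<and> y2 = k) \<or> (0 = k \<and> y2 = 0 \<and> (u,y1) \<in> A)"
        using mstep[of u 0 y1 y2] y yy by blast
      then have "y = (u,k)" using yy k by auto
      then obtain z where z: "z \<in> set ws" "((u,k),z) \<in> ?A" "?c (u,k) = ?c z" using step y by blast
      obtain z1 z2 where zz: "z = (z1,z2)" by (cases z)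
      have "(u = z1 \<and> k = 0 \<and> z2 = k) \<or> (k = k \<and> z2 = 0 \<and> (u,z1) \<in> A)"
        using mstep[of u k z1 z2] z zz by blast
      then have "z2 = 0 \<and> (u,z1) \<in> A" using k by auto
      then show "\<exists>v\<in>S. (u,v) \<in> A" using z zz unfolding S_def by auto
    qed
    obtain vs where vs: "is_dicycle V A vs" "set vs \<subseteq> S"
      using cycle_exists[OF finS Sne SV Ssucc] G unfolding digraph_def by blast
    have "\<forall>x\<in>set vs. \<forall>y\<in>set vs. c x = c y"
    proof (intro ballI)
      fix x y assume "x \<in> set vs" "y \<in> set vs"
      then have "(x,0) \<in> set ws" "(y,0) \<in> set ws" "x \<in> V" "y \<in> V" using vs SV unfolding S_def by auto
      then have "?c (x,0) = ?c (y,0)" using mono by blast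
      then have "c x mod k = c y mod k" by simp
      moreover have "c x < k" "c y < k" using dc \<open>x \<in> V\<close> \<open>y \<in> V\<close> unfolding dicolouring_def by auto
      ultimately show "c x = c y" by simp
    qed
    then show False using vs dc unfolding dicolouring_def by blast
  qed
  then show ?thesis unfolding dicolouring_def using bound by blast
qed

lemma dir2:
  assumes k: "2 \<le> k" and G: "digraph V A" and dc: "dicolouring (split_V V k) (split_A V A k) k c'"
  shows "dicolouring V A k (\<lambda>u. c' (u,0))"
proof -
  have bound: "\<forall>v\<in>V. c' (v,0) < k" using dc unfolding dicolouring_def split_V_def by auto
  have "\<not> (\<forall>x\<in>set vs. \<forall>y\<in>set vs. c' (x,0) = c' (y,0))" if vs: "is_dicycle V A vs" for vs
  proof
    assume mono: "\<forall>x\<in>set vs. \<forall>y\<in>set vs. c' (x,0) = c' (y,0)"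
    define n where "n = length vs"
    have n2: "2 \<le> n" using vs unfolding is_dicycle_def n_def by simp
    have vsV: "set vs \<subseteq> V" using vs unfolding is_dicycle_def by simp
    have nxt: "\<exists>v\<in>set vs. (u,v) \<in> A" if uin: "u \<in> set vs" for u
    proof -
      obtain t where t: "t < n" "vs ! t = u" using uin unfolding n_def by (auto simp: in_set_conv_nth)
      have "(vs!t, vs ! ((t+1) mod n)) \<in> A" using vs t unfolding is_dicycle_def n_def by auto
      moreover have "vs ! ((t+1) mod n) \<in> set vs" using n2 unfolding n_def by (intro nth_mem mod_less_divisor) linarith
      ultimately show ?thesis using t by blast
    qed
    define S where "S = set vs \<times> {0,k}"
    have SV: "S \<subseteq> split_V V k" using vsV unfolding S_def split_V_def by auto
    have finS: "finite S" unfolding S_def by simp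
    have Sne: "S \<noteq> {}" using n2 unfolding S_def n_def by (cases vs) auto
    have Ssucc: "\<forall>x\<in>S. \<exists>y\<in>S. (x,y) \<in> split_A V A k"
    proof
      fix x assume "x \<in> S"
      then obtain u j where x: "x = (u,j)" "u \<in> set vs" "j = 0 \<or> j = k" unfolding S_def by auto
      show "\<exists>y\<in>S. (x,y) \<in> split_A V A k"
      proof (cases "j = 0")
        case True
        then have "(x, (u,k)) \<in> split_A V A k" using x vsV unfolding split_A_def by auto
        then show ?thesis using x unfolding S_def by auto
      next
        case False
        then have jk: "j = k" using x by simp
        obtain v where v: "v \<in> set vs" "(u,v) \<in> A" using nxt x by blast
        then have "(x, (v,0)) \<in> split_A V A k" using x jk unfolding split_A_def by auto
        then show ?thesis using v unfolding S_def by auto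
      qed
    qed
    obtain ws where ws: "is_dicycle (split_V V k) (split_A V A k) ws" "set ws \<subseteq> S"
      using cycle_exists[OF finS Sne SV Ssucc split_noloop[OF k]] by blast
    have col: "c' x = c' (fst x, 0)" if "x \<in> S" for x
      using that gadget[OF k dc] vsV unfolding S_def by auto
    have "\<forall>x\<in>set ws. \<forall>y\<in>set ws. c' x = c' y"
    proof (intro ballI)
      fix x y assume "x \<in> set ws" "y \<in> set ws"
      then have "x \<in> S" "y \<in> S" using ws by auto
      then show "c' x = c' y" using col mono unfolding S_def by (metis SigmaE fst_conv)
    qed
    then show False using ws dc unfolding dicolouring_def by blast
  qed
  then show ?thesis unfolding dicolouring_def using bound by blast
qed

lemma card_gadget: "j \<le> k \<Longrightarrow> card ({u::'a} \<times> ({0..k} - {j})) = k"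
  by (simp add: card_cartesian_product_singleton)

lemma deg_bound:
  assumes k: "2 \<le> k" and x: "x \<in> split_V V k"
  shows "min (outdeg (split_V V k) (split_A V A k) x) (indeg (split_V V k) (split_A V A k) x) \<le> k"
proof -
  obtain u j where xu: "x = (u,j)" "j \<le> k" using x unfolding split_V_def by auto
  show ?thesis
  proof (cases "j = 0")
    case True
    have "{w \<in> split_V V k. (x, w) \<in> split_A V A k} \<subseteq> {u} \<times> ({0..k} - {j})"
      using xu True k unfolding split_A_def split_V_def by auto
    then have "outdeg (split_V V k) (split_A V A k) x \<le> k"
      unfolding outdeg_def using card_mono[of "{u} \<times> ({0..k} - {j})"] card_gadget[OF xu(2), of u] by force
    then show ?thesis by simp
  next
    case False
    have "{w \<in> split_V V k. (w, x) \<in> split_A V A k} \<subseteq> {u} \<times> ({0..k} - {j})"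
      using xu False k unfolding split_A_def split_V_def by auto
    then have "indeg (split_V V k) (split_A V A k) x \<le> k"
      unfolding indeg_def using card_mono[of "{u} \<times> ({0..k} - {j})"] card_gadget[OF xu(2), of u] by force
    then show ?thesis by simp
  qed
qed

theorem mainTheorem10:
  fixes V :: "'a set" and A :: "('a \<times> 'a) set" and k :: nat
  assumes "2 \<le> k" and "digraph V A"
  shows "delta_min (split_V V k) (split_A V A k) \<le> k \<and>
         (dicolourable V A k \<longleftrightarrow> dicolourable (split_V V k) (split_A V A k) k)"
proof
  show "delta_min (split_V V k) (split_A V A k) \<le> k"
    unfolding delta_min_def using deg_bound[OF assms(1)] split_fin[OF assms(2)]
    by (simp add: Max_le_iff) blast
  show "dicolourable V A k \<longleftrightarrow> dicolourable (split_V V k) (split_A V A k) k"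
    unfolding dicolourable_def using dir1[OF assms] dir2[OF assms] by blast
qed

end
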